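(* Let $q_1, q_2$ be real numbers with $0< q_1, q_2 \leq 1$ and let $m,n$ be integers such that $q_1m$ and $q_2n$ are integers. If $H$ is a connected signed bipartite graph, then $$z(m, n, H) \geq \frac{1}{2\max\{q_1, q_2\}}\, z(q_1m, q_2n, H).$$
   Context: A signed bipartite graph is a bipartite graph with a proper vertex 2-colouring by $+$ and $-$. $z(m,n,H)$ is the maximum number of edges in a signed bipartite graph with $+$ class of size $m$ and $-$ class of size $n$ containing no copy of $H$ with $+$ vertices mapped into the $+$ class and $-$ vertices into the $-$ class. *)

theory Defs
  imports Main Complex_Main
begin

text \<open>A signed bipartite graph H is given by its + class P, its - class N and
an edge set E \<subseteq> P \<times> N.\<close>

definition signed_bip :: "'a set \<Rightarrow> 'b set \<Rightarrow> ('a \<times> 'b) set \<Rightarrow> bool" where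
  "signed_bip P N E \<longleftrightarrow> finite P \<and> finite N \<and> E \<subseteq> P \<times> N"

definition sb_adj :: "('a \<times> 'b) set \<Rightarrow> ('a + 'b) \<Rightarrow> ('a + 'b) \<Rightarrow> bool" where
  "sb_adj E u v \<longleftrightarrow> (\<exists>a b. (a, b) \<in> E \<and> ((u = Inl a \<and> v = Inr b) \<or> (u = Inr b \<and> v = Inl a)))"

definition sb_connected :: "'a set \<Rightarrow> 'b set \<Rightarrow> ('a \<times> 'b) set \<Rightarrow> bool" where
  "sb_connected P N E \<longleftrightarrow> P <+> N \<noteq> {} \<and>
     (\<forall>u \<in> P <+> N. \<forall>v \<in> P <+> N. (sb_adj E)\<^sup>*\<^sup>* u v)"

definition contains_copy ::
  "(nat \<times> nat) set \<Rightarrow> nat \<Rightarrow> nat \<Rightarrow> 'a set \<Rightarrow> 'b set \<Rightarrow> ('a \<times> 'b) set \<Rightarrow> bool" where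
  "contains_copy F m n P N E \<longleftrightarrow>
     (\<exists>f g. inj_on f P \<and> f ` P \<subseteq> {0..<m} \<and> inj_on g N \<and> g ` N \<subseteq> {0..<n} \<and>
            (\<forall>(a, b) \<in> E. (f a, g b) \<in> F))"

text \<open>z(m,n,H): maximum number of edges of an H-free signed bipartite graph
with + class of size m and - class of size n (0 if no such graph exists).\<close>
definition zfun :: "nat \<Rightarrow> nat \<Rightarrow> 'a set \<Rightarrow> 'b set \<Rightarrow> ('a \<times> 'b) set \<Rightarrow> nat" where
  "zfun m n P N E = Sup {card F | F. F \<subseteq> {0..<m} \<times> {0..<n} \<and> \<not> contains_copy F m n P N E}"

end

theory Submission
  imports Defs
begin

lemma zfun_bdd:
  "{card F | F. F \<subseteq> {0..<m} \<times> {0..<n} \<and> \<not> contains_copy F m n P N E} \<subseteq> {0..m*n}"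
proof
  fix x assume "x \<in> {card F | F. F \<subseteq> {0..<m} \<times> {0..<n} \<and> \<not> contains_copy F m n P N E}"
  then obtain F where F: "x = card F" "F \<subseteq> {0..<m} \<times> {0..<n}" by blast
  have "card F \<le> card ({0..<m} \<times> {0..<n})" using F by (intro card_mono) auto
  then show "x \<in> {0..m*n}" using F by (simp add: card_cartesian_product)
qed

lemma Sup_nat_ne: "(X::nat set) \<noteq> {} \<Longrightarrow> Sup X = Max X"
  by (simp add: Sup_nat_def)

lemma zfun_upper:
  assumes "F \<subseteq> {0..<m} \<times> {0..<n}" "\<not> contains_copy F m n P N E"
  shows "card F \<le> zfun m n P N E"
  unfolding zfun_def
proof (rule cSup_upper)
  show "card F \<in> {card F | F. F \<subseteq> {0..<m} \<times> {0..<n} \<and> \<not> contains_copy F m n P N E}"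
    using assms by blast
  show "bdd_above {card F | F. F \<subseteq> {0..<m} \<times> {0..<n} \<and> \<not> contains_copy F m n P N E}"
    using zfun_bdd[of m n P N E] by (meson bdd_above_Icc bdd_above_mono)
qed

lemma zfun_attained:
  "zfun m n P N E = 0 \<or> (\<exists>F. F \<subseteq> {0..<m} \<times> {0..<n} \<and> \<not> contains_copy F m n P N E
      \<and> card F = zfun m n P N E)"
proof -
  let ?S = "{card F | F. F \<subseteq> {0..<m} \<times> {0..<n} \<and> \<not> contains_copy F m n P N E}"
  have fin: "finite ?S" using zfun_bdd[of m n P N E] finite_subset by blast
  show ?thesis
  proof (cases "?S = {}")
    case True then show ?thesis unfolding zfun_def by (simp add: Sup_nat_def)
  next
    case False
    have "Max ?S \<in> ?S" by (rule Max_in[OF fin False])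
    moreover have "zfun m n P N E = Max ?S" unfolding zfun_def by (rule Sup_nat_ne[OF False])
    ultimately obtain F where "F \<subseteq> {0..<m} \<times> {0..<n}" "\<not> contains_copy F m n P N E"
      "card F = zfun m n P N E" by (smt (verit) mem_Collect_eq)
    then show ?thesis by blast
  qed
qed

definition blk :: "nat \<Rightarrow> nat \<Rightarrow> nat \<Rightarrow> (nat \<times> nat) set \<Rightarrow> (nat \<times> nat) set" where
  "blk k m' n' F' = (\<lambda>(i,(x,y)). (i*m'+x, i*n'+y)) ` ({..<k} \<times> F')"

lemma blk_card:
  assumes "F' \<subseteq> {0..<m'} \<times> {0..<n'}"
  shows "card (blk k m' n' F') = k * card F'"
proof -
  have fin: "finite F'" using assms finite_subset by blast
  have "inj_on (\<lambda>(i,(x,y)). (i*m'+x, i*n'+y)) ({..<k} \<times> F')"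
  proof (rule inj_onI)
    fix p q
    assume hp: "p \<in> {..<k} \<times> F'" and hq: "q \<in> {..<k} \<times> F'"
      and eq: "(\<lambda>(i,(x,y)). (i*m'+x, i*n'+y)) p = (\<lambda>(i,(x,y)). (i*m'+x, i*n'+y)) q"
    obtain i x y where p: "p = (i,x,y)" by (cases p) auto
    obtain j u v where q: "q = (j,u,v)" by (cases q) auto
    have h: "i * m' + x = j * m' + u" "i * n' + y = j * n' + v" using eq p q by auto
    have "x < m'" "u < m'" using hp hq p q assms by auto
    then have "(i * m' + x) div m' = i" "(j * m' + u) div m' = j" by auto
    then have "i = j" using h by simp
    then show "p = q" using h p q by simp
  qed
  then show ?thesis unfolding blk_def using fin
    by (simp add: card_image card_cartesian_product)
qed

lemma blk_sub:
  assumes "F' \<subseteq> {0..<m'} \<times> {0..<n'}" "k*m' \<le> m" "k*n' \<le> n"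
  shows "blk k m' n' F' \<subseteq> {0..<m} \<times> {0..<n}"
proof clarify
  fix a b assume "(a,b) \<in> blk k m' n' F'"
  then obtain i x y where h: "i < k" "(x,y) \<in> F'" "a = i*m'+x" "b = i*n'+y"
    unfolding blk_def by auto
  have "x < m'" "y < n'" using h assms by auto
  have "i*m' + x < (i+1)*m'" using \<open>x < m'\<close> by simp
  also have "... \<le> k*m'" using h by (intro mult_right_mono) auto
  finally have "a < m" using h assms by linarith
  have "i*n' + y < (i+1)*n'" using \<open>y < n'\<close> by simp
  also have "... \<le> k*n'" using h by (intro mult_right_mono) auto
  finally have "b < n" using h assms by linarith
  show "a \<in> {0..<m} \<and> b \<in> {0..<n}" using \<open>a<m\<close> \<open>b<n\<close> by simp
qed

lemma blk_mem:
  assumes "F' \<subseteq> {0..<m'} \<times> {0..<n'}" "(a,b) \<in> blk k m' n' F'"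
  shows "a div m' = b div n' \<and> a div m' < k \<and> (a mod m', b mod n') \<in> F'"
proof -
  obtain i x y where h: "i < k" "(x,y) \<in> F'" "a = i*m'+x" "b = i*n'+y"
    using assms(2) unfolding blk_def by auto
  have "x < m'" "y < n'" using h assms by auto
  then show ?thesis using h by auto
qed

lemma blk_free:
  assumes bip: "signed_bip P N E" and conn: "sb_connected P N E" and ne: "E \<noteq> {}"
    and F': "F' \<subseteq> {0..<m'} \<times> {0..<n'}" and free: "\<not> contains_copy F' m' n' P N E"
  shows "\<not> contains_copy (blk k m' n' F') m n P N E"
proof
  assume "contains_copy (blk k m' n' F') m n P N E"
  then obtain f g where fg: "inj_on f P" "inj_on g N"
    and ed: "\<forall>(a, b) \<in> E. (f a, g b) \<in> blk k m' n' F'"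
    unfolding contains_copy_def by blast
  define bl where "bl = case_sum (\<lambda>a. f a div m') (\<lambda>b. g b div n')"
  have step: "bl u = bl v" if adj: "sb_adj E u v" for u v
  proof -
    obtain a b where ab: "(a,b) \<in> E" "(u = Inl a \<and> v = Inr b) \<or> (u = Inr b \<and> v = Inl a)"
      using adj unfolding sb_adj_def by blast
    have "(f a, g b) \<in> blk k m' n' F'" using ed ab by blast
    then have "f a div m' = g b div n'" using blk_mem[OF F'] by blast
    then show ?thesis using ab unfolding bl_def by auto
  qed
  have rt: "bl u = bl v" if "(sb_adj E)\<^sup>*\<^sup>* u v" for u v
    using that by (induction rule: rtranclp_induct) (auto dest: step)
  obtain a0 b0 where e0: "(a0,b0) \<in> E" using ne by auto
  have a0: "a0 \<in> P" using e0 bip unfolding signed_bip_def by auto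
  have "(f a0, g b0) \<in> blk k m' n' F'" using ed e0 by blast
  then have i0: "f a0 div m' < k" using blk_mem[OF F'] by blast
  have allbl: "bl u = f a0 div m'" if "u \<in> P <+> N" for u
  proof -
    have "(sb_adj E)\<^sup>*\<^sup>* u (Inl a0)" using conn that a0 unfolding sb_connected_def by blast
    then show ?thesis using rt unfolding bl_def by fastforce
  qed
  have fdiv: "f a div m' = f a0 div m'" if "a \<in> P" for a
    using allbl[of "Inl a"] that unfolding bl_def by auto
  have gdiv: "g b div n' = f a0 div m'" if "b \<in> N" for b
    using allbl[of "Inr b"] that unfolding bl_def by auto
  have m'0: "m' > 0"
    using F' \<open>(f a0, g b0) \<in> blk k m' n' F'\<close> unfolding blk_def by auto
  have n'0: "n' > 0"
    using F' \<open>(f a0, g b0) \<in> blk k m' n' F'\<close> unfolding blk_def by auto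
  have "contains_copy F' m' n' P N E"
    unfolding contains_copy_def
  proof (intro exI[of _ "\<lambda>a. f a mod m'"] exI[of _ "\<lambda>b. g b mod n'"] conjI)
    show "inj_on (\<lambda>a. f a mod m') P"
    proof (rule inj_onI)
      fix a a' assume "a \<in> P" "a' \<in> P" "f a mod m' = f a' mod m'"
      then have "f a = f a'" using fdiv
        by (metis div_mult_mod_eq)
      then show "a = a'" using fg \<open>a \<in> P\<close> \<open>a' \<in> P\<close> by (meson inj_onD)
    qed
    show "inj_on (\<lambda>b. g b mod n') N"
    proof (rule inj_onI)
      fix a a' assume "a \<in> N" "a' \<in> N" "g a mod n' = g a' mod n'"
      then have "g a = g a'" using gdiv
        by (metis div_mult_mod_eq)
      then show "a = a'" using fg \<open>a \<in> N\<close> \<open>a' \<in> N\<close> by (meson inj_onD)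
    qed
    show "(\<lambda>a. f a mod m') ` P \<subseteq> {0..<m'}" using m'0 by auto
    show "(\<lambda>b. g b mod n') ` N \<subseteq> {0..<n'}" using n'0 by auto
    show "\<forall>(a, b)\<in>E. (f a mod m', g b mod n') \<in> F'"
      using ed blk_mem[OF F'] by blast
  qed
  then show False using free by blast
qed

lemma div_bound:
  fixes q :: real and m m' :: nat
  assumes "0 < q" "q \<le> 1" "real m' = q * real m" "m' > 0"
  shows "1 / (2 * q) \<le> real (m div m')"
proof -
  define d where "d = m div m'"
  have "m < (d+1) * m'" unfolding d_def using assms(4)
    by (metis add.commute div_mult_mod_eq mod_less_divisor mult_Suc nat_add_left_cancel_less plus_1_eq_Suc)
  then have lt: "real m < (real d + 1) * real m'" by (metis of_nat_1 of_nat_add of_nat_less_iff of_nat_mult)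
  have "real m' \<le> real m" using assms(1,2,3) mult_right_mono[of q 1 "real m"] by simp
  then have "m' \<le> m" by simp
  then have d1: "d \<ge> 1" unfolding d_def using assms(4) div_le_mono[of m' m m'] by simp
  have "real m * q < (real d + 1) * real m' * q" using lt assms(1) by simp
  then have "real m' < (real d + 1) * real m' * q" using assms(3) by (simp add: mult.commute)
  then have "1 < (real d + 1) * q" using assms(4) by (simp add: mult.commute mult.left_commute)
  moreover have "(real d + 1) * q \<le> (2 * real d) * q"
    by (rule mult_right_mono) (use d1 assms(1) in simp_all)
  ultimately have "1 < real d * (2 * q)" by (simp add: mult.assoc mult.left_commute)
  moreover have "0 < 2 * q" using assms(1) by simp
  ultimately have "1 / (2 * q) \<le> real d" by (simp add: pos_divide_le_eq)
  then show ?thesis unfolding d_def .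
qed

theorem lemma4p2:
  fixes q1 q2 :: real and m n m' n' :: nat
    and P :: "'a set" and N :: "'b set" and E :: "('a \<times> 'b) set"
  assumes "0 < q1" "q1 \<le> 1" "0 < q2" "q2 \<le> 1"
    and "real m' = q1 * real m" "real n' = q2 * real n"
    and "signed_bip P N E" "sb_connected P N E"
  shows "real (zfun m n P N E) \<ge> 1 / (2 * max q1 q2) * real (zfun m' n' P N E)"
proof (cases "zfun m' n' P N E = 0")
  case True then show ?thesis by simp
next
  case False
  then obtain F' where F': "F' \<subseteq> {0..<m'} \<times> {0..<n'}" and free: "\<not> contains_copy F' m' n' P N E"
    and cF: "card F' = zfun m' n' P N E" using zfun_attained[of m' n' P N E] by auto
  then have "F' \<noteq> {}" using False by auto
  then obtain x y where "(x,y) \<in> F'" by auto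
  then have m'0: "m' > 0" and n'0: "n' > 0" using F' by auto
  have Ene: "E \<noteq> {}"
  proof
    assume E0: "E = {}"
    have adj0: "\<not> sb_adj E u v" for u v unfolding sb_adj_def E0 by simp
    have rt: "(sb_adj E)\<^sup>*\<^sup>* u v \<Longrightarrow> u = v" for u v
      by (induction rule: rtranclp_induct) (auto simp: adj0)
    have sub: "\<forall>u\<in>P <+> N. \<forall>v\<in>P <+> N. u = v"
      using assms(8) rt unfolding sb_connected_def by blast
    have "inj_on (\<lambda>_. 0::nat) P"
    proof (rule inj_onI)
      fix x y assume "x \<in> P" "y \<in> P"
      then have "(Inl x :: 'a + 'b) = Inl y" using sub by blast
      then show "x = y" by simp
    qed
    moreover have "inj_on (\<lambda>_. 0::nat) N"
    proof (rule inj_onI)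
      fix x y assume "x \<in> N" "y \<in> N"
      then have "(Inr x :: 'a + 'b) = Inr y" using sub by blast
      then show "x = y" by simp
    qed
    ultimately have "contains_copy F' m' n' P N E"
      unfolding contains_copy_def E0 using m'0 n'0
      by (intro exI[of _ "\<lambda>_. 0::nat"] conjI) auto
    then show False using free by simp
  qed
  define k where "k = min (m div m') (n div n')"
  have km: "k * m' \<le> m" unfolding k_def
    by (meson div_times_less_eq_dividend le_trans min.cobounded1 mult_le_mono1)
  have kn: "k * n' \<le> n" unfolding k_def
    by (meson div_times_less_eq_dividend le_trans min.cobounded2 mult_le_mono1)
  have "card (blk k m' n' F') \<le> zfun m n P N E"
    by (rule zfun_upper[OF blk_sub[OF F' km kn] blk_free[OF assms(7,8) Ene F' free]])
  then have le: "real k * real (zfun m' n' P N E) \<le> real (zfun m n P N E)"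
    using blk_card[OF F', of k] cF by (metis of_nat_le_iff of_nat_mult)
  have mx: "0 < max q1 q2" using assms(1) by simp
  have "1 / (2 * max q1 q2) \<le> 1 / (2 * q1)"
    by (rule divide_left_mono) (use assms(1) mx in auto)
  then have b1: "1 / (2 * max q1 q2) \<le> real (m div m')"
    using div_bound[OF assms(1,2,5) m'0] by linarith
  have "1 / (2 * max q1 q2) \<le> 1 / (2 * q2)"
    by (rule divide_left_mono) (use assms(3) mx in auto)
  then have b2: "1 / (2 * max q1 q2) \<le> real (n div n')"
    using div_bound[OF assms(3,4,6) n'0] by linarith
  have "1 / (2 * max q1 q2) \<le> real k" unfolding k_def using b1 b2 by simp
  then have "1 / (2 * max q1 q2) * real (zfun m' n' P N E) \<le> real k * real (zfun m' n' P N E)"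
    by (rule mult_right_mono) simp
  then show ?thesis using le by linarith
qed

end
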